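(* Consider the Friedmann system $\Omega'=-\mu\Omega+\mu\Omega^2$, $H'=-H-\tfrac12\mu\Omega H$, $\mu'=0$ and its line of equilibria $(\Omega,H,\mu)=(1,H,-2)$, at which the Jacobian of $(\Omega',H')$ with respect to $(\Omega,H)$ is $\mathrm{diag}(-2,0)$. Set $\mu_1=\mu+2$. (i) At the equilibrium $(1,0,-2)$ (dispersive Einstein static universe) the local parametric center manifold is $\Omega=1$ and the reduced dynamics is $dH/d\tilde\tau=-\tfrac14\mu_1H$, $\mu_1'=0$, where $\tilde\tau=2\tau$. (ii) At the equilibrium $(1,1,-2)$ (dispersive de Sitter universe) the local parametric center manifold is $\Omega=1$ and the reduced dynamics is $dH/d\tau=-\tfrac12\mu_1 H$, $\mu_1'=0$. In both cases the reduced field $f(H,\mu_1)=c\,\mu_1H$ ($c\ne0$ constant) violates the transversality condition at $(H,\mu_1)=(0,0)$ ($\partial f/\partial\mu_1(0,0)=0$) and the nondegeneracy condition ($\partial^2 f/\partial H^2=0$), so it does not undergo a saddle-node, transcritical or pitchfork bifurcation there.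
   Context: The Friedmann system describes a Robertson–Walker universe with perfect fluid $p=(\gamma-1)\rho$, density parameter $\Omega$, Hubble parameter $H$, dimensionless time $\tau$ ($'=d/d\tau$, $dt/d\tau=1/H$), and $\mu=3\gamma-2$ treated as a parameter. A local parametric center manifold is a locally invariant graph over the center directions (here $H$ and the parameter) tangent to the center eigenspace at the equilibrium. *)

theory Defs
  imports "HOL-Analysis.Analysis"
begin

definition friedmann_Omega :: "real \<Rightarrow> real \<Rightarrow> real \<Rightarrow> real" where
  "friedmann_Omega Om H mu = - mu * Om + mu * Om ^ 2"

definition friedmann_H :: "real \<Rightarrow> real \<Rightarrow> real \<Rightarrow> real" where
  "friedmann_H Om H mu = - H - 1/2 * mu * Om * H"

definition friedmann_mu :: "real \<Rightarrow> real \<Rightarrow> real \<Rightarrow> real" where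
  "friedmann_mu Om H mu = 0"

text \<open>A local parametric center manifold at the equilibrium (Om0, H0, mu0):
  a graph Omega = h(H, mu) over the center directions (H and the parameter mu),
  defined and C1 on an open neighbourhood U of (H0, mu0), passing through the
  equilibrium, locally invariant (the vector field is tangent to the graph on U,
  i.e. the invariance equation holds), and tangent at (H0, mu0) to the center
  eigenspace, which at the equilibria on the line (1, H, -2) is the coordinate
  subspace Omega = 0 (so the tangency condition is Dh(H0,mu0) = 0).\<close>

definition local_param_center_manifold ::
  "(real \<times> real \<Rightarrow> real) \<Rightarrow> real \<Rightarrow> real \<Rightarrow> real \<Rightarrow> bool" where
  "local_param_center_manifold h Om0 H0 mu0 \<longleftrightarrow>
     (\<exists>U. open U \<and> (H0, mu0) \<in> U \<and> h (H0, mu0) = Om0 \<and>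
        (\<forall>p\<in>U. \<exists>D. (h has_derivative D) (at p) \<and>
            friedmann_Omega (h p) (fst p) (snd p) =
              D (friedmann_H (h p) (fst p) (snd p), friedmann_mu (h p) (fst p) (snd p))) \<and>
        continuous_on U (\<lambda>p. frechet_derivative h (at p)) \<and>
        (h has_derivative (\<lambda>_. 0)) (at (H0, mu0)))"

definition d_x :: "(real \<Rightarrow> real \<Rightarrow> real) \<Rightarrow> real \<Rightarrow> real \<Rightarrow> real" where
  "d_x f x m = deriv (\<lambda>y. f y m) x"

definition d_m :: "(real \<Rightarrow> real \<Rightarrow> real) \<Rightarrow> real \<Rightarrow> real \<Rightarrow> real" where
  "d_m f x m = deriv (\<lambda>n. f x n) m"

definition d_xx :: "(real \<Rightarrow> real \<Rightarrow> real) \<Rightarrow> real \<Rightarrow> real \<Rightarrow> real" where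
  "d_xx f x m = deriv (\<lambda>y. d_x f y m) x"

definition d_xm :: "(real \<Rightarrow> real \<Rightarrow> real) \<Rightarrow> real \<Rightarrow> real \<Rightarrow> real" where
  "d_xm f x m = deriv (\<lambda>n. d_x f x n) m"

definition d_xxx :: "(real \<Rightarrow> real \<Rightarrow> real) \<Rightarrow> real \<Rightarrow> real \<Rightarrow> real" where
  "d_xxx f x m = deriv (\<lambda>y. d_xx f y m) x"

text \<open>Sotomayor-type conditions for local bifurcations of x' = f(x, m) at (x0, m0)
  (scalar case, as in Perko, Differential Equations and Dynamical Systems, 4.2).\<close>

definition saddle_node_conditions :: "(real \<Rightarrow> real \<Rightarrow> real) \<Rightarrow> real \<Rightarrow> real \<Rightarrow> bool" where
  "saddle_node_conditions f x0 m0 \<longleftrightarrow>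
     f x0 m0 = 0 \<and> d_x f x0 m0 = 0 \<and> d_m f x0 m0 \<noteq> 0 \<and> d_xx f x0 m0 \<noteq> 0"

definition transcritical_conditions :: "(real \<Rightarrow> real \<Rightarrow> real) \<Rightarrow> real \<Rightarrow> real \<Rightarrow> bool" where
  "transcritical_conditions f x0 m0 \<longleftrightarrow>
     f x0 m0 = 0 \<and> d_x f x0 m0 = 0 \<and> d_m f x0 m0 = 0 \<and> d_xm f x0 m0 \<noteq> 0 \<and> d_xx f x0 m0 \<noteq> 0"

definition pitchfork_conditions :: "(real \<Rightarrow> real \<Rightarrow> real) \<Rightarrow> real \<Rightarrow> real \<Rightarrow> bool" where
  "pitchfork_conditions f x0 m0 \<longleftrightarrow>
     f x0 m0 = 0 \<and> d_x f x0 m0 = 0 \<and> d_m f x0 m0 = 0 \<and> d_xm f x0 m0 \<noteq> 0 \<and>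
     d_xx f x0 m0 = 0 \<and> d_xxx f x0 m0 \<noteq> 0"

end

theory Submission
  imports Defs
begin

lemma cm_const: "local_param_center_manifold (\<lambda>_. 1) 1 H0 (-2)"
proof -
  have fd: "frechet_derivative (\<lambda>_::real\<times>real. 1::real) (at p) = (\<lambda>_. 0)" for p
    by (rule frechet_derivative_at[symmetric]) (rule has_derivative_const)
  show ?thesis
    unfolding local_param_center_manifold_def
    apply (rule exI[of _ UNIV])
    apply (simp add: fd friedmann_Omega_def)
    using has_derivative_const by blast
qed

lemma dx_f: "d_x (\<lambda>H mu1. c * mu1 * H) x m = c * m"
  unfolding d_x_def
  by (rule DERIV_imp_deriv) (auto intro!: derivative_eq_intros)

lemma dm_f: "d_m (\<lambda>H mu1. c * mu1 * H) x m = c * x"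
  unfolding d_m_def
  by (rule DERIV_imp_deriv) (auto intro!: derivative_eq_intros)

lemma dxx_f: "d_xx (\<lambda>H mu1. c * mu1 * H) x m = 0"
  unfolding d_xx_def dx_f by simp

lemma dxm_f: "d_xm (\<lambda>H mu1. c * mu1 * H) x m = c"
  unfolding d_xm_def dx_f
  by (rule DERIV_imp_deriv) (auto intro!: derivative_eq_intros)

lemma dxxx_f: "d_xxx (\<lambda>H mu1. c * mu1 * H) x m = 0"
  unfolding d_xxx_def dxx_f by simp

theorem mainTheorem6:
  shows
    \<comment> \<open>line of equilibria (1, H, -2)\<close>
    "(\<forall>H. friedmann_Omega 1 H (-2) = 0 \<and> friedmann_H 1 H (-2) = 0 \<and> friedmann_mu 1 H (-2) = 0)
   \<comment> \<open>(i) at (1,0,-2): center manifold Omega = 1; reduced dynamics in tau~ = 2 tau, mu1 = mu + 2\<close>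
   \<and> local_param_center_manifold (\<lambda>_. 1) 1 0 (-2)
   \<and> (\<forall>H mu1. (1/2) * friedmann_H 1 H (mu1 - 2) = - (1/4) * mu1 * H
              \<and> friedmann_mu 1 H (mu1 - 2) = 0)
   \<comment> \<open>(ii) at (1,1,-2): center manifold Omega = 1; reduced dynamics in tau\<close>
   \<and> local_param_center_manifold (\<lambda>_. 1) 1 1 (-2)
   \<and> (\<forall>H mu1. friedmann_H 1 H (mu1 - 2) = - (1/2) * mu1 * H
              \<and> friedmann_mu 1 H (mu1 - 2) = 0)
   \<comment> \<open>f(H, mu1) = c mu1 H, c \<noteq> 0: transversality and nondegeneracy fail, no SN/TC/PF\<close>
   \<and> (\<forall>c::real. c \<noteq> 0 \<longrightarrow>
        (let f = (\<lambda>H mu1. c * mu1 * H) in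
           d_m f 0 0 = 0 \<and> (\<forall>H mu1. d_xx f H mu1 = 0) \<and>
           \<not> saddle_node_conditions f 0 0 \<and>
           \<not> transcritical_conditions f 0 0 \<and>
           \<not> pitchfork_conditions f 0 0))"
  by (simp add: cm_const dx_f dm_f dxx_f dxm_f dxxx_f friedmann_Omega_def friedmann_H_def
      friedmann_mu_def saddle_node_conditions_def transcritical_conditions_def
      pitchfork_conditions_def Let_def algebra_simps del: mult.commute mult.left_commute mult.assoc)

end
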